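(* Let $g_1, g_2 \in \mathbb{R}^d$, let $G = (g_1, g_2) \in \mathbb{R}^{d \times 2}$ be the matrix with columns $g_1, g_2$, and let $\alpha = (\alpha_1, \alpha_2)^T$ with $\alpha_1, \alpha_2 > 0$. If $G^T G \alpha = \frac{1}{\alpha}$, then $\frac{\alpha_1}{\alpha_2} = \frac{\|g_2\|}{\|g_1\|}$.
   Context: $\frac{1}{\alpha}$ denotes the componentwise reciprocal $(1/\alpha_1, 1/\alpha_2)^T$, and $\|\cdot\|$ is the Euclidean norm. *)

theory Defs
  imports "HOL-Analysis.Analysis"
begin

end

theory Submission
  imports Defs
begin

theorem corollary1:
  fixes g1 g2 :: "real ^ 'd" and \<alpha> :: "real ^ 2"
  defines "G \<equiv> (\<chi> i j. if j = 1 then g1 $ i else g2 $ i) :: real ^ 2 ^ 'd"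
  assumes "\<alpha> $ 1 > 0" and "\<alpha> $ 2 > 0"
    and "(transpose G ** G) *v \<alpha> = (\<chi> j. 1 / (\<alpha> $ j))"
  shows "\<alpha> $ 1 / \<alpha> $ 2 = norm g2 / norm g1"
proof -
  define a where "a = \<alpha> $ 1"
  define b where "b = \<alpha> $ 2"
  have U: "(UNIV :: 2 set) = {1,2}" using exhaust_2 by auto
  have M: "(transpose G ** G) $ j $ k = (\<Sum>i\<in>UNIV. G $ i $ j * G $ i $ k)" for j k
    by (simp add: matrix_matrix_mult_def transpose_def)
  have G1: "G $ i $ 1 = g1 $ i" and G2: "G $ i $ 2 = g2 $ i" for i
    by (simp_all add: G_def)
  have e1: "((transpose G ** G) *v \<alpha>) $ 1 = 1 / a"
    using assms(4) a_def by simp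
  have e2: "((transpose G ** G) *v \<alpha>) $ 2 = 1 / b"
    using assms(4) b_def by simp
  have E1: "(g1 \<bullet> g1) * a + (g1 \<bullet> g2) * b = 1 / a"
    using e1 unfolding matrix_vector_mult_def M G1 G2 a_def b_def
    by (simp add: U inner_vec_def G1 G2)
  have E2: "(g1 \<bullet> g2) * a + (g2 \<bullet> g2) * b = 1 / b"
    using e2 unfolding matrix_vector_mult_def M G1 G2 a_def b_def
    by (simp add: U inner_vec_def G1 G2 mult.commute)
  have ap: "a > 0" "b > 0" using assms a_def b_def by auto
  have F1: "(g1 \<bullet> g1) * a^2 + (g1 \<bullet> g2) * (a*b) = 1"
    using E1 ap by (simp add: field_simps power2_eq_square)
  have F2: "(g1 \<bullet> g2) * (a*b) + (g2 \<bullet> g2) * b^2 = 1"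
    using E2 ap by (simp add: field_simps power2_eq_square)
  have g1nz: "g1 \<noteq> 0" using F1 by auto
  have g2nz: "g2 \<noteq> 0" using F2 by auto
  have "(norm g1 * a)^2 = (norm g2 * b)^2"
    using F1 F2 by (simp add: power2_norm_eq_inner power_mult_distrib)
  hence "norm g1 * a = norm g2 * b"
    using ap by (simp add: power2_eq_iff_nonneg)
  thus ?thesis using ap g1nz unfolding a_def[symmetric] b_def[symmetric]
    by (simp add: field_simps)
qed

end
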